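(* There is a universal constant $c<\infty$ with the following property: if $f\in C^\infty(H^2)$ is a positive solution of $x^{-3}(x^3f_x)_x+f_{yy}=0$ (equivalently $f_{xx}+f_{yy}+3x^{-1}f_x=0$) on $H^2$, then $$x\,|\nabla\log f|(x,y)<c\quad\text{for all }(x,y)\in H^2,$$ where $\nabla$ is the Euclidean gradient in $(x,y)$.
   Context: $H^2=\{(x,y)\in\mathbb{R}^2: x>0\}$ is the open right half-plane. *)

theory Defs
  imports "HOL-Analysis.Analysis"
begin

definition H2 :: "(real \<times> real) set" where
  "H2 = {p. fst p > 0}"

definition px :: "(real \<times> real \<Rightarrow> real) \<Rightarrow> real \<times> real \<Rightarrow> real" where
  "px g p = deriv (\<lambda>t. g (t, snd p)) (fst p)"

definition py :: "(real \<times> real \<Rightarrow> real) \<Rightarrow> real \<times> real \<Rightarrow> real" where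
  "py g p = deriv (\<lambda>t. g (fst p, t)) (snd p)"

text \<open>Iterated partial derivative along a list of directions (True = x, False = y).\<close>
fun iter_partial :: "bool list \<Rightarrow> (real \<times> real \<Rightarrow> real) \<Rightarrow> real \<times> real \<Rightarrow> real" where
  "iter_partial [] g = g"
| "iter_partial (d # ds) g = (if d then px else py) (iter_partial ds g)"

definition smooth_on :: "(real \<times> real) set \<Rightarrow> (real \<times> real \<Rightarrow> real) \<Rightarrow> bool" where
  "smooth_on S g \<longleftrightarrow> (\<forall>ds. iter_partial ds g differentiable_on S)"

end

theory Submission
  imports Defs
begin


lemma partial_x:
  assumes "g differentiable (at (t, y))"
  shows "((\<lambda>s. g (s, y)) has_real_derivative px g (t, y)) (at t)"
proof -
  obtain D where D: "(g has_derivative D) (at (t, y))"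
    using assms unfolding differentiable_def by blast
  have lin: "linear D" using D has_derivative_linear by blast
  have p: "((\<lambda>s. (s, y)) has_derivative (\<lambda>h. (h, 0))) (at t)"
    by (auto intro!: derivative_eq_intros)
  have c: "((\<lambda>s. g (s, y)) has_derivative (\<lambda>h. D (h, 0))) (at t)"
    using has_derivative_compose[OF p, of g D] D by (simp add: o_def)
  have e: "(\<lambda>h. D (h, 0)) = (\<lambda>h. D (1, 0) * h)"
  proof
    fix h :: real
    have "D (h, 0) = D (h *\<^sub>R (1, 0))" by simp
    also have "\<dots> = h *\<^sub>R D (1,0)" by (rule linear_scale[OF lin])
    finally show "D (h, 0) = D (1, 0) * h" by (simp add: real_scaleR_def)
  qed
  have d: "((\<lambda>s. g (s, y)) has_real_derivative D (1, 0)) (at t)"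
    using c e by (simp add: has_field_derivative_def)
  then have "px g (t, y) = D (1, 0)" unfolding px_def by (simp add: DERIV_imp_deriv)
  with d show ?thesis by simp
qed

lemma partial_y:
  assumes "g differentiable (at (x, t))"
  shows "((\<lambda>s. g (x, s)) has_real_derivative py g (x, t)) (at t)"
proof -
  obtain D where D: "(g has_derivative D) (at (x, t))"
    using assms unfolding differentiable_def by blast
  have lin: "linear D" using D has_derivative_linear by blast
  have p: "((\<lambda>s. (x, s)) has_derivative (\<lambda>h. (0, h))) (at t)"
    by (auto intro!: derivative_eq_intros)
  have c: "((\<lambda>s. g (x, s)) has_derivative (\<lambda>h. D (0, h))) (at t)"
    using has_derivative_compose[OF p, of g D] D by (simp add: o_def)
  have e: "(\<lambda>h. D (0, h)) = (\<lambda>h. D (0, 1) * h)"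
  proof
    fix h :: real
    have "D (0, h) = D (h *\<^sub>R (0, 1))" by simp
    also have "\<dots> = h *\<^sub>R D (0,1)" by (rule linear_scale[OF lin])
    finally show "D (0, h) = D (0, 1) * h" by (simp add: real_scaleR_def)
  qed
  have d: "((\<lambda>s. g (x, s)) has_real_derivative D (0, 1)) (at t)"
    using c e by (simp add: has_field_derivative_def)
  then have "py g (x, t) = D (0, 1)" unfolding py_def by (simp add: DERIV_imp_deriv)
  with d show ?thesis by simp
qed

lemma iter_px: "iter_partial ds (px g) = iter_partial (ds @ [True]) g"
  by (induction ds) auto
lemma iter_py: "iter_partial ds (py g) = iter_partial (ds @ [False]) g"
  by (induction ds) auto

lemma smooth_px: "smooth_on S g \<Longrightarrow> smooth_on S (px g)"
  unfolding smooth_on_def by (simp add: iter_px)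
lemma smooth_py: "smooth_on S g \<Longrightarrow> smooth_on S (py g)"
  unfolding smooth_on_def by (simp add: iter_py)

lemma open_H2: "open H2"
  unfolding H2_def by (intro open_Collect_less continuous_intros)

lemma smooth_diff: "smooth_on H2 g \<Longrightarrow> p \<in> H2 \<Longrightarrow> g differentiable (at p)"
  unfolding smooth_on_def using iter_partial.simps(1)
  by (metis differentiable_on_eq_differentiable_at open_H2)

lemma smooth_cont: "smooth_on H2 g \<Longrightarrow> p \<in> H2 \<Longrightarrow> continuous (at p) g"
  using smooth_diff differentiable_imp_continuous_within by blast

lemma smooth_cont_on: "smooth_on H2 g \<Longrightarrow> continuous_on H2 g"
  by (simp add: continuous_at_imp_continuous_on smooth_cont)

lemma H2_iff[simp]: "(a, b) \<in> H2 \<longleftrightarrow> a > 0" unfolding H2_def by simp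



lemma dist_small:
  fixes a b x y h :: real
  assumes "\<bar>a - x\<bar> < h" "\<bar>b - y\<bar> < h"
  shows "dist (a, b) (x, y) < 2 * h"
proof -
  have h: "h > 0" using assms by linarith
  have "(a-x)\<^sup>2 < h\<^sup>2" using assms by (simp add: abs_less_iff power2_eq_square) (smt (verit) mult_strict_mono' mult_minus_left mult_minus_right abs_of_nonneg abs_ge_zero)
  moreover have "(b-y)\<^sup>2 < h\<^sup>2" using assms by (simp add: abs_less_iff power2_eq_square) (smt (verit) mult_strict_mono' mult_minus_left mult_minus_right abs_of_nonneg abs_ge_zero)
  ultimately have "(a-x)\<^sup>2 + (b-y)\<^sup>2 < (2*h)\<^sup>2" using h by (simp add: power2_eq_square) (smt (verit) mult_pos_pos)
  hence "sqrt ((a-x)\<^sup>2 + (b-y)\<^sup>2) < 2*h" using h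
    by (metis abs_of_pos mult_pos_pos real_sqrt_abs real_sqrt_less_mono zero_less_numeral)
  thus ?thesis by (simp add: dist_Pair_Pair dist_real_def)
qed

lemma second_diff:
  assumes sm: "smooth_on H2 g" and x: "x > 0" and h: "0 < h"
  shows "\<exists>a b. x < a \<and> a < x + h \<and> y < b \<and> b < y + h \<and>
     g (x+h, y+h) - g (x, y+h) - g (x+h, y) + g (x, y) = h\<^sup>2 * py (px g) (a, b)"
    and "\<exists>a b. x < a \<and> a < x + h \<and> y < b \<and> b < y + h \<and>
     g (x+h, y+h) - g (x, y+h) - g (x+h, y) + g (x, y) = h\<^sup>2 * px (py g) (a, b)"
proof -
  have gd: "\<And>a b. a > 0 \<Longrightarrow> g differentiable (at (a, b))"
    using smooth_diff[OF sm] by simp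
  have gxd: "\<And>a b. a > 0 \<Longrightarrow> px g differentiable (at (a, b))"
    using smooth_diff[OF smooth_px[OF sm]] by simp
  have gyd: "\<And>a b. a > 0 \<Longrightarrow> py g differentiable (at (a, b))"
    using smooth_diff[OF smooth_py[OF sm]] by simp
  let ?D = "g (x+h, y+h) - g (x, y+h) - g (x+h, y) + g (x, y)"
  have "\<exists>a. x < a \<and> a < x + h \<and> (\<lambda>s. g (s, y+h) - g (s, y)) (x+h) - (\<lambda>s. g (s, y+h) - g (s, y)) x
      = (x + h - x) * (px g (a, y+h) - px g (a, y))"
    by (rule MVT2) (use h x in \<open>auto intro!: derivative_eq_intros partial_x gd\<close>)
  then obtain a where a: "x < a" "a < x + h" "?D = h * (px g (a, y+h) - px g (a, y))"
    by auto
  have "\<exists>b. y < b \<and> b < y + h \<and> (\<lambda>t. px g (a, t)) (y+h) - (\<lambda>t. px g (a, t)) y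
      = (y + h - y) * py (px g) (a, b)"
    by (rule MVT2) (use h x a in \<open>auto intro!: partial_y gxd\<close>)
  then obtain b where b: "y < b" "b < y + h" "px g (a, y+h) - px g (a, y) = h * py (px g) (a, b)"
    by auto
  show "\<exists>a b. x < a \<and> a < x + h \<and> y < b \<and> b < y + h \<and> ?D = h\<^sup>2 * py (px g) (a, b)"
    using a b by (intro exI[of _ a] exI[of _ b]) (simp add: power2_eq_square)
  have "\<exists>b. y < b \<and> b < y + h \<and> (\<lambda>t. g (x+h, t) - g (x, t)) (y+h) - (\<lambda>t. g (x+h, t) - g (x, t)) y
      = (y + h - y) * (py g (x+h, b) - py g (x, b))"
    by (rule MVT2) (use h x in \<open>auto intro!: derivative_eq_intros partial_y gd\<close>)
  then obtain b' where b': "y < b'" "b' < y + h" "?D = h * (py g (x+h, b') - py g (x, b'))"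
    by (auto simp: algebra_simps)
  have "\<exists>a. x < a \<and> a < x + h \<and> (\<lambda>s. py g (s, b')) (x+h) - (\<lambda>s. py g (s, b')) x
      = (x + h - x) * px (py g) (a, b')"
    by (rule MVT2) (use h x in \<open>auto intro!: partial_x gyd\<close>)
  then obtain a' where a': "x < a'" "a' < x + h" "py g (x+h, b') - py g (x, b') = h * px (py g) (a', b')"
    by auto
  show "\<exists>a b. x < a \<and> a < x + h \<and> y < b \<and> b < y + h \<and> ?D = h\<^sup>2 * px (py g) (a, b)"
    using a' b' by (intro exI[of _ a'] exI[of _ b']) (simp add: power2_eq_square)
qed

lemma schwarz:
  assumes sm: "smooth_on H2 g" and p: "p \<in> H2"
  shows "px (py g) p = py (px g) p"
proof (rule ccontr)
  assume ne: "px (py g) p \<noteq> py (px g) p"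
  obtain x y where pxy: "p = (x, y)" by (cases p)
  have x: "x > 0" using p pxy by simp
  define e where "e = \<bar>px (py g) p - py (px g) p\<bar> / 2"
  have e: "e > 0" using ne e_def by simp
  have cA: "continuous (at p) (px (py g))" by (rule smooth_cont[OF smooth_px[OF smooth_py[OF sm]] p])
  have cB: "continuous (at p) (py (px g))" by (rule smooth_cont[OF smooth_py[OF smooth_px[OF sm]] p])
  obtain d1 where d1: "d1 > 0" "\<And>z. dist z p < d1 \<Longrightarrow> dist (px (py g) z) (px (py g) p) < e"
    using cA e unfolding continuous_at_eps_delta by blast
  obtain d2 where d2: "d2 > 0" "\<And>z. dist z p < d2 \<Longrightarrow> dist (py (px g) z) (py (px g) p) < e"
    using cB e unfolding continuous_at_eps_delta by blast
  define h where "h = min d1 d2 / 2"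
  have h: "h > 0" using d1 d2 h_def by simp
  obtain a b where ab: "x < a" "a < x + h" "y < b" "b < y + h"
     "g (x+h, y+h) - g (x, y+h) - g (x+h, y) + g (x, y) = h\<^sup>2 * py (px g) (a, b)"
    using second_diff(1)[OF sm x h] by blast
  obtain a' b' where ab': "x < a'" "a' < x + h" "y < b'" "b' < y + h"
     "g (x+h, y+h) - g (x, y+h) - g (x+h, y) + g (x, y) = h\<^sup>2 * px (py g) (a', b')"
    using second_diff(2)[OF sm x h] by blast
  have eq: "py (px g) (a, b) = px (py g) (a', b')" using ab(5) ab'(5) h by simp
  have "dist (a, b) p < 2 * h" unfolding pxy by (rule dist_small) (use ab in auto)
  hence "dist (py (px g) (a, b)) (py (px g) p) < e" using d2 h_def by (intro d2(2)) simp
  moreover have "dist (a', b') p < 2 * h" unfolding pxy by (rule dist_small) (use ab' in auto)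
  hence "dist (px (py g) (a', b')) (px (py g) p) < e" using d1 h_def by (intro d1(2)) simp
  ultimately show False using eq e_def by (simp add: dist_real_def) (smt (verit))
qed



lemma bochner_identity:
  fixes k p q xs m n A1 A2 B1 B2 :: real
  assumes pde0: "xs + n + 3*k*p = 0"
    and pdex: "A1 + B1 + 3*k*xs - 3*k\<^sup>2*p = 0"
    and pdey: "A2 + B2 + 3*k*m = 0"
  shows "((2*xs\<^sup>2 + 2*p*A1 + 2*m\<^sup>2 + 2*q*A2) - 4*(2*p*xs+2*q*m)*p - 2*(p\<^sup>2+q\<^sup>2)*xs + 6*(p\<^sup>2+q\<^sup>2)*p\<^sup>2)
       + ((2*m\<^sup>2 + 2*p*B1 + 2*n\<^sup>2 + 2*q*B2) - 4*(2*p*m+2*q*n)*q - 2*(p\<^sup>2+q\<^sup>2)*n + 6*(p\<^sup>2+q\<^sup>2)*q\<^sup>2)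
       + 3*k*(2*p*xs + 2*q*m - 2*(p\<^sup>2+q\<^sup>2)*p)
     = 2*((xs-p\<^sup>2)\<^sup>2 + 2*(m-p*q)\<^sup>2 + (n-q\<^sup>2)\<^sup>2)
       - 2*(p*(2*p*xs + 2*q*m - 2*(p\<^sup>2+q\<^sup>2)*p) + q*(2*p*m + 2*q*n - 2*(p\<^sup>2+q\<^sup>2)*q)) + 6*k\<^sup>2*p\<^sup>2"
  using pde0 pdex pdey by algebra

lemma key_ineq:
  fixes k p q xs m n A1 A2 B1 B2 P Px Py Pxx Pyy W Wx Wy Wxx Wyy :: real
  assumes k: "k > 0" and P: "P > 0" and Wpos: "W > 0"
    and pde0: "xs + n + 3*k*p = 0"
    and pdex: "A1 + B1 + 3*k*xs - 3*k\<^sup>2*p = 0"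
    and pdey: "A2 + B2 + 3*k*m = 0"
    and W: "W = p\<^sup>2 + q\<^sup>2"
    and Wx: "Wx = 2*p*xs + 2*q*m - 2*W*p"
    and Wy: "Wy = 2*p*m + 2*q*n - 2*W*q"
    and Wxx: "Wxx = (2*xs\<^sup>2 + 2*p*A1 + 2*m\<^sup>2 + 2*q*A2) - 4*(2*p*xs+2*q*m)*p - 2*W*xs + 6*W*p\<^sup>2"
    and Wyy: "Wyy = (2*m\<^sup>2 + 2*p*B1 + 2*n\<^sup>2 + 2*q*B2) - 4*(2*p*m+2*q*n)*q - 2*W*n + 6*W*q\<^sup>2"
    and gx: "2*P*Px*W + P\<^sup>2*Wx = 0"
    and gy: "2*P*Py*W + P\<^sup>2*Wy = 0"
    and g2: "(2*Px\<^sup>2 + 2*P*Pxx)*W + 4*P*Px*Wx + P\<^sup>2*Wxx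
           + ((2*Py\<^sup>2 + 2*P*Pyy)*W + 4*P*Py*Wy + P\<^sup>2*Wyy) \<le> 0"
  shows "P\<^sup>2*W \<le> 5*(26*(Px\<^sup>2+Py\<^sup>2) - 2*P*(Pxx+Pyy+3*k*Px))"
proof -
  define LW where "LW = Wxx + Wyy + 3*k*Wx"
  have boch: "LW = 2*((xs-p\<^sup>2)\<^sup>2 + 2*(m-p*q)\<^sup>2 + (n-q\<^sup>2)\<^sup>2) - 2*(p*Wx + q*Wy) + 6*k\<^sup>2*p\<^sup>2"
    unfolding LW_def Wxx Wyy Wx Wy W using bochner_identity[OF pde0 pdex pdey] by simp
  have sum: "(xs-p\<^sup>2) + (n-q\<^sup>2) + 3*(k*p) = - W" using pde0 W by (simp add: algebra_simps)
  have cs: "(2/5)*W\<^sup>2 \<le> 2*((xs-p\<^sup>2)\<^sup>2 + (n-q\<^sup>2)\<^sup>2) + 6*k\<^sup>2*p\<^sup>2"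
  proof -
    have gen: "(a+b+3*c)\<^sup>2 \<le> 5*(a\<^sup>2+b\<^sup>2+3*c\<^sup>2)" for a b c :: real
    proof -
      have "5*(a\<^sup>2+b\<^sup>2+3*c\<^sup>2) - (a+b+3*c)\<^sup>2 = (a-b)\<^sup>2 + 3*(a-c)\<^sup>2 + 3*(b-c)\<^sup>2"
        by (simp add: power2_eq_square algebra_simps)
      moreover have "(a-b)\<^sup>2 + 3*(a-c)\<^sup>2 + 3*(b-c)\<^sup>2 \<ge> 0" by simp
      ultimately show ?thesis by linarith
    qed
    have "W\<^sup>2 \<le> 5*((xs-p\<^sup>2)\<^sup>2 + (n-q\<^sup>2)\<^sup>2 + 3*(k*p)\<^sup>2)"
      using gen[of "xs-p\<^sup>2" "n-q\<^sup>2" "k*p"] sum by simp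
    thus ?thesis by (simp add: power_mult_distrib)
  qed
  have hLW: "LW \<ge> (2/5)*W\<^sup>2 - 2*(p*Wx + q*Wy)"
  proof -
    have "(m-p*q)\<^sup>2 \<ge> 0" by simp
    thus ?thesis using boch cs by (smt (verit))
  qed
  have "P*(2*Px*W + P*Wx) = 0" using gx by (simp add: power2_eq_square algebra_simps)
  hence "2*Px*W + P*Wx = 0" using P by simp
  hence hx: "P*Wx = -2*Px*W" by linarith
  have "P*(2*Py*W + P*Wy) = 0" using gy by (simp add: power2_eq_square algebra_simps)
  hence "2*Py*W + P*Wy = 0" using P by simp
  hence hy: "P*Wy = -2*Py*W" by linarith
  define Q where "Q = Px\<^sup>2 + Py\<^sup>2"
  have tot: "(2*Px\<^sup>2 + 2*P*Pxx)*W + 4*P*Px*Wx + P\<^sup>2*Wxx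
           + ((2*Py\<^sup>2 + 2*P*Pyy)*W + 4*P*Py*Wy + P\<^sup>2*Wyy)
        = (2*Q + 2*P*(Pxx+Pyy))*W - 8*Q*W + P\<^sup>2*LW + 6*k*P*Px*W"
  proof -
    have "4*P*Px*Wx = 4*Px*(P*Wx)" "4*P*Py*Wy = 4*Py*(P*Wy)" "P\<^sup>2*(3*k*Wx) = 3*k*P*(P*Wx)"
      by (simp_all add: power2_eq_square)
    thus ?thesis unfolding LW_def Q_def hx hy by (simp add: algebra_simps power2_eq_square)
  qed
  have P2LW: "P\<^sup>2*LW \<ge> (2/5)*P\<^sup>2*W\<^sup>2 + 4*P*W*(p*Px + q*Py)"
  proof -
    have "P\<^sup>2*LW \<ge> P\<^sup>2*((2/5)*W\<^sup>2 - 2*(p*Wx + q*Wy))"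
      using hLW by (simp add: mult_left_mono)
    also have "P\<^sup>2*((2/5)*W\<^sup>2 - 2*(p*Wx + q*Wy)) = (2/5)*P\<^sup>2*W\<^sup>2 - 2*P*(p*(P*Wx) + q*(P*Wy))"
      by (simp add: algebra_simps power2_eq_square)
    also have "\<dots> = (2/5)*P\<^sup>2*W\<^sup>2 + 4*P*W*(p*Px + q*Py)"
      unfolding hx hy by (simp add: algebra_simps)
    finally show ?thesis .
  qed
  have amgm: "4*P*(p*Px + q*Py) \<ge> -(P\<^sup>2*W/5 + 20*Q)"
  proof -
    have "4*P*(p*Px + q*Py) + (P\<^sup>2*W/5 + 20*Q) = ((P*p + 10*Px)\<^sup>2 + (P*q + 10*Py)\<^sup>2)/5"
      unfolding W Q_def by (simp add: power2_eq_square algebra_simps)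
    moreover have "((P*p + 10*Px)\<^sup>2 + (P*q + 10*Py)\<^sup>2)/5 \<ge> 0" by simp
    ultimately show ?thesis by linarith
  qed
  have amgmW: "4*P*W*(p*Px + q*Py) \<ge> -(P\<^sup>2*W/5 + 20*Q)*W"
    using mult_right_mono[OF amgm, of W] Wpos by (simp add: algebra_simps)
  have "W * ((2*Q + 2*P*(Pxx+Pyy)) - 8*Q + 6*k*P*Px + (1/5)*P\<^sup>2*W - 20*Q) \<le> 0"
  proof -
    have "W * ((2*Q + 2*P*(Pxx+Pyy)) - 8*Q + 6*k*P*Px + (1/5)*P\<^sup>2*W - 20*Q)
        = (2*Q + 2*P*(Pxx+Pyy))*W - 8*Q*W + 6*k*P*Px*W + ((2/5)*P\<^sup>2*W\<^sup>2 - (P\<^sup>2*W/5 + 20*Q)*W)"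
      by (simp add: algebra_simps power2_eq_square)
    also have "\<dots> \<le> (2*Q + 2*P*(Pxx+Pyy))*W - 8*Q*W + P\<^sup>2*LW + 6*k*P*Px*W"
      using P2LW amgmW by linarith
    also have "\<dots> \<le> 0" using tot g2 by linarith
    finally show ?thesis .
  qed
  hence "(2*Q + 2*P*(Pxx+Pyy)) - 8*Q + 6*k*P*Px + (1/5)*P\<^sup>2*W - 20*Q \<le> 0"
    using Wpos by (simp add: mult_le_0_iff)
  thus ?thesis unfolding Q_def by (simp add: algebra_simps)
qed



lemma second_deriv_test:
  fixes g g' :: "real \<Rightarrow> real"
  assumes d: "d > 0"
    and der: "\<And>t. \<bar>t - a\<bar> < d \<Longrightarrow> (g has_real_derivative g' t) (at t)"
    and der2: "(g' has_real_derivative D) (at a)"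
    and mx: "\<And>t. \<bar>t - a\<bar> < d \<Longrightarrow> g t \<le> g a"
  shows "g' a = 0" "D \<le> 0"
proof -
  show g0: "g' a = 0"
    by (rule DERIV_local_max[OF der[of a] d]) (use d mx in \<open>auto simp: abs_minus_commute\<close>)
  show "D \<le> 0"
  proof (rule ccontr)
    assume "\<not> D \<le> 0"
    hence "D > 0" by simp
    then obtain d' where d': "d' > 0" "\<And>h. h > 0 \<Longrightarrow> h < d' \<Longrightarrow> g' a < g' (a + h)"
      using DERIV_pos_inc_right[OF der2] by blast
    define h where "h = min d d' / 2"
    have h: "h > 0" "h < d" "h < d'" using d d'(1) h_def by auto
    obtain z where z: "a < z" "z < a + h" "g (a + h) - g a = (a + h - a) * g' z"
      using MVT2[of a "a+h" g g'] h der by force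
    have "g' z > 0" using d'(2)[of "z - a"] z h g0 by simp
    hence "h * g' z > 0" using h(1) by simp
    hence "g (a + h) > g a" using z by simp
    moreover have "g (a + h) \<le> g a" using mx[of "a+h"] h by simp
    ultimately show False by simp
  qed
qed

lemma quot_deriv:
  assumes "(U has_real_derivative U') (at t)" "(V has_real_derivative V') (at t)" "V t \<noteq> 0"
  shows "((\<lambda>s. U s / V s) has_real_derivative (U' / V t - (U t / V t) * (V' / V t))) (at t)"
  using DERIV_divide[OF assms] assms(3)
  by (simp add: field_simps power2_eq_square)



lemma at_max:
  fixes f :: "real \<times> real \<Rightarrow> real" and a b x0 y0 r \<delta> :: real
  assumes sm: "smooth_on H2 f" and pos: "\<forall>p\<in>H2. f p > 0"
    and pde: "\<forall>p\<in>H2. px (px f) p + py (py f) p + 3 / fst p * px f p = 0"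
    and \<delta>: "\<delta> > 0" "a > \<delta>" and r: "r > 0"
  defines "\<psi> \<equiv> \<lambda>z. 1 - ((fst z - x0)\<^sup>2 + (snd z - y0)\<^sup>2) / r\<^sup>2"
    and "W \<equiv> \<lambda>z. (px f z / f z)\<^sup>2 + (py f z / f z)\<^sup>2"
  assumes mxx: "\<And>t. \<bar>t - a\<bar> < \<delta> \<Longrightarrow> (\<psi> (t,b))\<^sup>2 * W (t,b) \<le> (\<psi> (a,b))\<^sup>2 * W (a,b)"
    and mxy: "\<And>s. \<bar>s - b\<bar> < \<delta> \<Longrightarrow> (\<psi> (a,s))\<^sup>2 * W (a,s) \<le> (\<psi> (a,b))\<^sup>2 * W (a,b)"
    and Ppos: "\<psi> (a,b) > 0" and Wpos: "W (a,b) > 0"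
  shows "(\<psi> (a,b))\<^sup>2 * W (a,b) \<le> 5*(26*((-2*(a-x0)/r\<^sup>2)\<^sup>2 + (-2*(b-y0)/r\<^sup>2)\<^sup>2)
            - 2*\<psi> (a,b)*((-2/r\<^sup>2) + (-2/r\<^sup>2) + 3*(1/a)*(-2*(a-x0)/r\<^sup>2)))"
proof -
  define X where "X = px f"
  define Y where "Y = py f"
  define XX where "XX = px X"
  define YX where "YX = py X"
  define YY where "YY = py Y"
  have smX: "smooth_on H2 X" unfolding X_def by (rule smooth_px[OF sm])
  have smY: "smooth_on H2 Y" unfolding Y_def by (rule smooth_py[OF sm])
  have smXX: "smooth_on H2 XX" unfolding XX_def by (rule smooth_px[OF smX])
  have smYX: "smooth_on H2 YX" unfolding YX_def by (rule smooth_py[OF smX])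
  have smYY: "smooth_on H2 YY" unfolding YY_def by (rule smooth_py[OF smY])
  have sym1: "px Y (t, y) = YX (t, y)" if "t > 0" for t y
    unfolding Y_def YX_def X_def by (rule schwarz[OF sm]) (use that in simp)
  have sym2: "px YY (t, y) = py YX (t, y)" if "t > 0" for t y
  proof -
    have "px YY (t, y) = py (px Y) (t, y)" unfolding YY_def by (rule schwarz[OF smY]) (use that in simp)
    also have "\<dots> = py YX (t, y)" unfolding py_def using sym1 that by simp
    finally show ?thesis .
  qed
  have sym3: "py XX (t, y) = px YX (t, y)" if "t > 0" for t y
    unfolding XX_def YX_def using schwarz[OF smX, of "(t,y)"] that by simp
  have fpos: "f (t, y) > 0" if "t > 0" for t y using pos that by simp
  have Dx: "\<And>g t y. smooth_on H2 g \<Longrightarrow> t > 0 \<Longrightarrow> ((\<lambda>s. g (s, y)) has_real_derivative px g (t, y)) (at t)"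
    by (rule partial_x, rule smooth_diff) auto
  have Dy: "\<And>g t y. smooth_on H2 g \<Longrightarrow> t > 0 \<Longrightarrow> ((\<lambda>s. g (t, s)) has_real_derivative py g (t, y)) (at y)"
    by (rule partial_y, rule smooth_diff) auto
  define pN where "pN = (\<lambda>z. X z / f z)"
  define qN where "qN = (\<lambda>z. Y z / f z)"
  define xN where "xN = (\<lambda>z. XX z / f z)"
  define mN where "mN = (\<lambda>z. YX z / f z)"
  define nN where "nN = (\<lambda>z. YY z / f z)"
  define Px where "Px = (\<lambda>t. -2*(t-x0)/r\<^sup>2)"
  define Py where "Py = (\<lambda>t. -2*(t-y0)/r\<^sup>2)"
  have Weq: "W = (\<lambda>z. (pN z)\<^sup>2 + (qN z)\<^sup>2)" unfolding W_def pN_def qN_def X_def Y_def by simp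
  have dpx: "((\<lambda>s. pN (s, y)) has_real_derivative xN (t,y) - pN (t,y) * pN (t,y)) (at t)" if "t > 0" for t y
    unfolding pN_def xN_def using quot_deriv[OF Dx[OF smX that, where y=y] Dx[OF sm that, where y=y]] fpos[OF that, of y]
    by (simp add: XX_def X_def)
  have dqx: "((\<lambda>s. qN (s, y)) has_real_derivative mN (t,y) - qN (t,y) * pN (t,y)) (at t)" if "t > 0" for t y
    unfolding pN_def qN_def mN_def using quot_deriv[OF Dx[OF smY that, where y=y] Dx[OF sm that, where y=y]] fpos[OF that, of y] sym1[OF that]
    by (simp add: X_def)
  have dsx: "((\<lambda>s. xN (s, y)) has_real_derivative px XX (t,y) / f (t,y) - xN (t,y) * pN (t,y)) (at t)" if "t > 0" for t y
    unfolding pN_def xN_def using quot_deriv[OF Dx[OF smXX that, where y=y] Dx[OF sm that, where y=y]] fpos[OF that, of y]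
    by (simp add: X_def)
  have dmx: "((\<lambda>s. mN (s, y)) has_real_derivative px YX (t,y) / f (t,y) - mN (t,y) * pN (t,y)) (at t)" if "t > 0" for t y
    unfolding pN_def mN_def using quot_deriv[OF Dx[OF smYX that, where y=y] Dx[OF sm that, where y=y]] fpos[OF that, of y]
    by (simp add: X_def)
  have dpy: "((\<lambda>s. pN (t, s)) has_real_derivative mN (t,y) - pN (t,y) * qN (t,y)) (at y)" if "t > 0" for t y
    unfolding pN_def qN_def mN_def using quot_deriv[OF Dy[OF smX that, where y=y] Dy[OF sm that, where y=y]] fpos[OF that, of y]
    by (simp add: YX_def Y_def)
  have dqy: "((\<lambda>s. qN (t, s)) has_real_derivative nN (t,y) - qN (t,y) * qN (t,y)) (at y)" if "t > 0" for t y
    unfolding nN_def qN_def using quot_deriv[OF Dy[OF smY that, where y=y] Dy[OF sm that, where y=y]] fpos[OF that, of y]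
    by (simp add: YY_def Y_def)
  have dmy: "((\<lambda>s. mN (t, s)) has_real_derivative py YX (t,y) / f (t,y) - mN (t,y) * qN (t,y)) (at y)" if "t > 0" for t y
    unfolding mN_def qN_def using quot_deriv[OF Dy[OF smYX that, where y=y] Dy[OF sm that, where y=y]] fpos[OF that, of y]
    by (simp add: Y_def)
  have dny: "((\<lambda>s. nN (t, s)) has_real_derivative py YY (t,y) / f (t,y) - nN (t,y) * qN (t,y)) (at y)" if "t > 0" for t y
    unfolding nN_def qN_def using quot_deriv[OF Dy[OF smYY that, where y=y] Dy[OF sm that, where y=y]] fpos[OF that, of y]
    by (simp add: Y_def)
  define E1 where "E1 = (\<lambda>t. 2*\<psi>(t,b)*Px t*((pN (t,b))\<^sup>2 + (qN (t,b))\<^sup>2)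
      + (\<psi>(t,b))\<^sup>2*(2*pN (t,b)*xN (t,b) + 2*qN (t,b)*mN (t,b) - 2*((pN (t,b))\<^sup>2 + (qN (t,b))\<^sup>2)*pN (t,b)))"
  have dPx: "(Px has_real_derivative -2/r\<^sup>2) (at t)" for t
    unfolding Px_def using r by (auto intro!: derivative_eq_intros simp: field_simps)
  have dPy: "(Py has_real_derivative -2/r\<^sup>2) (at t)" for t
    unfolding Py_def using r by (auto intro!: derivative_eq_intros simp: field_simps)
  have dpsix: "((\<lambda>s. \<psi> (s,y)) has_real_derivative Px t) (at t)" for t y
    unfolding \<psi>_def Px_def using r by (auto intro!: derivative_eq_intros simp: field_simps power2_eq_square)
  have dpsiy: "((\<lambda>s. \<psi> (t,s)) has_real_derivative Py y) (at y)" for t y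
    unfolding \<psi>_def Py_def using r by (auto intro!: derivative_eq_intros simp: field_simps power2_eq_square)
  have dgx: "((\<lambda>s. (\<psi> (s,b))\<^sup>2 * W (s,b)) has_real_derivative E1 t) (at t)" if "t > 0" for t
    unfolding Weq E1_def
    by (auto intro!: derivative_eq_intros dpx[OF that] dqx[OF that] dpsix simp: algebra_simps power2_eq_square)
  define E1y where "E1y = (\<lambda>s. 2*\<psi>(a,s)*Py s*((pN (a,s))\<^sup>2 + (qN (a,s))\<^sup>2)
      + (\<psi>(a,s))\<^sup>2*(2*pN (a,s)*mN (a,s) + 2*qN (a,s)*nN (a,s) - 2*((pN (a,s))\<^sup>2 + (qN (a,s))\<^sup>2)*qN (a,s)))"
  have a0: "a > 0" using \<delta> by simp
  have dgy: "((\<lambda>s. (\<psi> (a,s))\<^sup>2 * W (a,s)) has_real_derivative E1y y) (at y)" for y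
    unfolding Weq E1y_def
    by (auto intro!: derivative_eq_intros dpy[OF a0] dqy[OF a0] dpsiy simp: algebra_simps power2_eq_square)
  define P where "P = \<psi> (a,b)"
  define pv where "pv = pN (a,b)"
  define qv where "qv = qN (a,b)"
  define xv where "xv = xN (a,b)"
  define mv where "mv = mN (a,b)"
  define nv where "nv = nN (a,b)"
  define A1 where "A1 = px XX (a,b) / f (a,b)"
  define A2 where "A2 = px YX (a,b) / f (a,b)"
  define B1 where "B1 = py YX (a,b) / f (a,b)"
  define B2 where "B2 = py YY (a,b) / f (a,b)"
  define Wv where "Wv = pv\<^sup>2 + qv\<^sup>2"
  define Wx where "Wx = 2*pv*xv + 2*qv*mv - 2*Wv*pv"
  define Wy where "Wy = 2*pv*mv + 2*qv*nv - 2*Wv*qv"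
  define Wxx where "Wxx = (2*xv\<^sup>2 + 2*pv*A1 + 2*mv\<^sup>2 + 2*qv*A2) - 4*(2*pv*xv+2*qv*mv)*pv - 2*Wv*xv + 6*Wv*pv\<^sup>2"
  define Wyy where "Wyy = (2*mv\<^sup>2 + 2*pv*B1 + 2*nv\<^sup>2 + 2*qv*B2) - 4*(2*pv*mv+2*qv*nv)*qv - 2*Wv*nv + 6*Wv*qv\<^sup>2"
  have dE1: "(E1 has_real_derivative (2*(Px a)\<^sup>2 + 2*P*(-2/r\<^sup>2))*Wv + 4*P*Px a*Wx + P\<^sup>2*Wxx) (at a)"
    unfolding E1_def Wxx_def Wx_def Wv_def P_def pv_def qv_def xv_def mv_def A1_def A2_def
    by (auto intro!: derivative_eq_intros dpx[OF a0] dqx[OF a0] dsx[OF a0] dmx[OF a0] dpsix dPx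
        simp: algebra_simps power2_eq_square)
  have dE1y: "(E1y has_real_derivative (2*(Py b)\<^sup>2 + 2*P*(-2/r\<^sup>2))*Wv + 4*P*Py b*Wy + P\<^sup>2*Wyy) (at b)"
    unfolding E1y_def Wyy_def Wy_def Wv_def P_def pv_def qv_def nv_def mv_def B1_def B2_def
    by (auto intro!: derivative_eq_intros dpy[OF a0] dqy[OF a0] dmy[OF a0] dny[OF a0] dpsiy dPy
        simp: algebra_simps power2_eq_square)
  have tx: "E1 a = 0" "(2*(Px a)\<^sup>2 + 2*P*(-2/r\<^sup>2))*Wv + 4*P*Px a*Wx + P\<^sup>2*Wxx \<le> 0"
  proof -
    have der: "((\<lambda>s. (\<psi> (s,b))\<^sup>2 * W (s,b)) has_real_derivative E1 t) (at t)" if "\<bar>t - a\<bar> < \<delta>" for t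
      using dgx[of t] that \<delta> by simp
    show "E1 a = 0" "(2*(Px a)\<^sup>2 + 2*P*(-2/r\<^sup>2))*Wv + 4*P*Px a*Wx + P\<^sup>2*Wxx \<le> 0"
      using second_deriv_test[OF \<delta>(1) der dE1 mxx] by auto
  qed
  have ty: "E1y b = 0" "(2*(Py b)\<^sup>2 + 2*P*(-2/r\<^sup>2))*Wv + 4*P*Py b*Wy + P\<^sup>2*Wyy \<le> 0"
    using second_deriv_test[OF \<delta>(1) dgy dE1y mxy] by auto
  have gx: "2*P*Px a*Wv + P\<^sup>2*Wx = 0"
    using tx(1) unfolding E1_def Wx_def Wv_def P_def pv_def qv_def xv_def mv_def by simp
  have gy: "2*P*Py b*Wv + P\<^sup>2*Wy = 0"
    using ty(1) unfolding E1y_def Wy_def Wv_def P_def pv_def qv_def nv_def mv_def by simp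
  have fab: "f (a,b) > 0" using fpos[OF a0] .
  have pdeat: "XX (t,y) + YY (t,y) + 3/t * X (t,y) = 0" if "t > 0" for t y
    using pde[rule_format, of "(t,y)"] that unfolding XX_def YY_def X_def Y_def by simp
  have pde0n: "xv + nv + 3*(1/a)*pv = 0"
  proof -
    have "(XX (a,b) + YY (a,b) + 3/a * X (a,b)) / f (a,b) = 0" using pdeat[OF a0] by simp
    thus ?thesis unfolding xv_def nv_def pv_def xN_def nN_def pN_def using fab
      by (simp add: add_divide_distrib)
  qed
  have pdexn: "A1 + B1 + 3*(1/a)*xv - 3*(1/a)\<^sup>2*pv = 0"
  proof -
    have dh: "((\<lambda>t. XX (t,b) + YY (t,b) + 3/t * X (t,b)) has_real_derivative
        px XX (a,b) + px YY (a,b) + (3/a * XX (a,b) - 3/a\<^sup>2 * X (a,b))) (at a)"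
      using a0 by (auto intro!: derivative_eq_intros Dx[OF smXX a0] Dx[OF smYY a0] Dx[OF smX a0, folded XX_def]
          simp: field_simps power2_eq_square)
    have "px XX (a,b) + px YY (a,b) + (3/a * XX (a,b) - 3/a\<^sup>2 * X (a,b)) = 0"
    proof (rule DERIV_local_const[OF dh a0], intro allI impI)
      fix y assume "\<bar>a - y\<bar> < a"
      hence y: "y > 0" by arith
      show "XX (a,b) + YY (a,b) + 3/a * X (a,b) = XX (y,b) + YY (y,b) + 3/y * X (y,b)"
        using pdeat[OF a0, of b] pdeat[OF y, of b] by linarith
    qed
    hence "(px XX (a,b) + py YX (a,b) + 3/a * XX (a,b) - 3/a\<^sup>2 * X (a,b)) / f (a,b) = 0"
      using sym2[OF a0] by simp
    thus ?thesis unfolding A1_def B1_def xv_def pv_def xN_def pN_def using fab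
      by (simp add: add_divide_distrib diff_divide_distrib power2_eq_square)
  qed
  have pdeyn: "A2 + B2 + 3*(1/a)*mv = 0"
  proof -
    have dh: "((\<lambda>s. XX (a,s) + YY (a,s) + 3/a * X (a,s)) has_real_derivative
        py XX (a,b) + py YY (a,b) + 3/a * YX (a,b)) (at b)"
      using a0 by (auto intro!: derivative_eq_intros Dy[OF smXX a0] Dy[OF smYY a0] Dy[OF smX a0, folded YX_def])
    have "py XX (a,b) + py YY (a,b) + 3/a * YX (a,b) = 0"
    proof (rule DERIV_local_const[OF dh, of 1], simp, intro allI impI)
      fix y
      show "XX (a,b) + YY (a,b) + 3/a * X (a,b) = XX (a,y) + YY (a,y) + 3/a * X (a,y)"
        using pdeat[OF a0, of b] pdeat[OF a0, of y] by linarith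
    qed
    hence "(px YX (a,b) + py YY (a,b) + 3/a * YX (a,b)) / f (a,b) = 0"
      using sym3[OF a0] by simp
    thus ?thesis unfolding A2_def B2_def mv_def mN_def using fab
      by (simp add: add_divide_distrib)
  qed
  have Wvpos: "Wv > 0" using Wpos unfolding Wv_def pv_def qv_def Weq by simp
  have k: "1/a > 0" using a0 by simp
  have Pp: "P > 0" using Ppos P_def by simp
  have main: "P\<^sup>2*Wv \<le> 5*(26*((Px a)\<^sup>2+(Py b)\<^sup>2) - 2*P*((-2/r\<^sup>2)+(-2/r\<^sup>2)+3*(1/a)*Px a))"
    by (rule key_ineq[OF k Pp Wvpos pde0n pdexn pdeyn Wv_def Wx_def Wy_def Wxx_def Wyy_def gx gy])
       (use tx(2) ty(2) in linarith)
  show ?thesis using main unfolding P_def Wv_def pv_def qv_def Px_def Py_def Weq by simp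
qed



lemma numeric_bound:
  fixes a b x0 y0 r P :: real
  assumes r: "r > 0" and P: "0 < P" "P \<le> 1"
    and d: "(a-x0)\<^sup>2 + (b-y0)\<^sup>2 < r\<^sup>2" and ar: "a > r"
  shows "5*(26*((-2*(a-x0)/r\<^sup>2)\<^sup>2 + (-2*(b-y0)/r\<^sup>2)\<^sup>2)
            - 2*P*((-2/r\<^sup>2) + (-2/r\<^sup>2) + 3*(1/a)*(-2*(a-x0)/r\<^sup>2))) \<le> 620 / r\<^sup>2"
proof -
  define u where "u = a - x0"
  define v where "v = b - y0"
  have r2: "r\<^sup>2 > 0" using r by simp
  have uv: "u\<^sup>2 + v\<^sup>2 < r\<^sup>2" using d u_def v_def by simp
  have e1: "(-2*u/r\<^sup>2)\<^sup>2 + (-2* v/r\<^sup>2)\<^sup>2 = 4*(u\<^sup>2+v\<^sup>2)/r\<^sup>2/r\<^sup>2"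
    by (simp add: power_divide field_simps power2_eq_square add_divide_distrib)
  have "4*(u\<^sup>2+v\<^sup>2)/r\<^sup>2 \<le> 4" using uv r2 by (simp add: field_simps)
  hence "4*(u\<^sup>2+v\<^sup>2)/r\<^sup>2/r\<^sup>2 \<le> 4/r\<^sup>2" by (rule divide_right_mono) (use r2 in simp)
  hence b1: "(-2*u/r\<^sup>2)\<^sup>2 + (-2* v/r\<^sup>2)\<^sup>2 \<le> 4/r\<^sup>2" unfolding e1 .
  have "\<bar>u\<bar> < r"
  proof -
    have "v\<^sup>2 \<ge> 0" by simp
    hence "u\<^sup>2 < r\<^sup>2" using uv by linarith
    hence "\<bar>u\<bar>\<^sup>2 < r\<^sup>2" by simp
    thus ?thesis using r power2_less_imp_less[of "\<bar>u\<bar>" r] by simp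
  qed
  hence ua: "u / a \<le> 1" using ar r by (simp add: divide_le_eq_1)
  have e2: "- 2*P*((-2/r\<^sup>2) + (-2/r\<^sup>2) + 3*(1/a)*(-2*u/r\<^sup>2)) = (8*P + 12*(P*(u/a)))/r\<^sup>2"
    using ar r by (simp add: field_simps)
  have "P*(u/a) \<le> 1"
  proof -
    have "P*(u/a) \<le> P*1" using P ua by (intro mult_left_mono) auto
    thus ?thesis using P by simp
  qed
  hence "8*P + 12*(P*(u/a)) \<le> 20" using P by linarith
  hence "(8*P + 12*(P*(u/a)))/r\<^sup>2 \<le> 20/r\<^sup>2" by (rule divide_right_mono) (use r2 in simp)
  hence b2: "- 2*P*((-2/r\<^sup>2) + (-2/r\<^sup>2) + 3*(1/a)*(-2*u/r\<^sup>2)) \<le> 20/r\<^sup>2"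
    unfolding e2 .
  define S1 where "S1 = (-2*u/r\<^sup>2)\<^sup>2 + (-2* v/r\<^sup>2)\<^sup>2"
  define S2 where "S2 = 2*P*((-2/r\<^sup>2) + (-2/r\<^sup>2) + 3*(1/a)*(-2*u/r\<^sup>2))"
  have c1: "S1 \<le> 4/r\<^sup>2" using b1 S1_def by simp
  have c2: "- S2 \<le> 20/r\<^sup>2" using b2 S2_def by simp
  define T where "T = 1/r\<^sup>2"
  have "S1 \<le> 4*T" "- S2 \<le> 20*T" using c1 c2 T_def by simp_all
  hence "5*(26*S1 - S2) \<le> 620*T" by (simp add: algebra_simps)
  hence "5*(26*S1 - S2) \<le> 620/r\<^sup>2" using T_def by simp
  thus ?thesis unfolding S1_def S2_def u_def v_def by simp
qed



lemma point_bound: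
  fixes f :: "real \<times> real \<Rightarrow> real"
  assumes sm: "smooth_on H2 f" and pos: "\<forall>p\<in>H2. f p > 0"
    and pde: "\<forall>p\<in>H2. px (px f) p + py (py f) p + 3 / fst p * px f p = 0"
    and x0: "x0 > 0"
  shows "x0\<^sup>2 * ((px f (x0,y0) / f (x0,y0))\<^sup>2 + (py f (x0,y0) / f (x0,y0))\<^sup>2) \<le> 2480"
proof -
  define r where "r = x0 / 2"
  have r: "r > 0" using x0 r_def by simp
  define \<psi> where "\<psi> = (\<lambda>z::real\<times>real. 1 - ((fst z - x0)\<^sup>2 + (snd z - y0)\<^sup>2) / r\<^sup>2)"
  define W where "W = (\<lambda>z. (px f z / f z)\<^sup>2 + (py f z / f z)\<^sup>2)"
  define G where "G = (\<lambda>z. (\<psi> z)\<^sup>2 * W z)"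
  define K where "K = cball (x0,y0) r"
  have distsq: "(fst z - x0)\<^sup>2 + (snd z - y0)\<^sup>2 = (dist z (x0,y0))\<^sup>2" for z :: "real \<times> real"
    by (cases z) (simp add: dist_Pair_Pair dist_real_def)
  have KH: "K \<subseteq> H2"
  proof
    fix z assume "z \<in> K"
    hence "dist z (x0,y0) \<le> r" unfolding K_def by (simp add: dist_commute)
    moreover have "dist (fst z) x0 \<le> dist z (x0,y0)" using dist_fst_le[of z "(x0,y0)"] by simp
    ultimately have "\<bar>fst z - x0\<bar> \<le> r" by (simp add: dist_real_def)
    thus "z \<in> H2" unfolding H2_def using r_def x0 by auto
  qed
  have contf: "continuous_on K f" using continuous_on_subset[OF smooth_cont_on[OF sm] KH] .
  have contX: "continuous_on K (px f)" using continuous_on_subset[OF smooth_cont_on[OF smooth_px[OF sm]] KH] .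
  have contY: "continuous_on K (py f)" using continuous_on_subset[OF smooth_cont_on[OF smooth_py[OF sm]] KH] .
  have fnz: "\<forall>z\<in>K. f z \<noteq> 0" using pos KH by fastforce
  have contG: "continuous_on K G"
    unfolding G_def W_def \<psi>_def
    by (intro continuous_intros contf contX contY) (use fnz r in auto)
  have "compact K" "K \<noteq> {}" unfolding K_def using r by auto
  then obtain q where q: "q \<in> K" "\<And>z. z \<in> K \<Longrightarrow> G z \<le> G q"
    using continuous_attains_sup[OF _ _ contG] by blast
  show ?thesis
  proof (cases "W (x0,y0) = 0")
    case True
    have "x0\<^sup>2 * W (x0,y0) = 0" using True by simp
    thus ?thesis unfolding W_def by linarith
  next
    case False
    have W0: "W (x0,y0) > 0" using False unfolding W_def
      by (metis add_nonneg_nonneg less_eq_real_def zero_le_power2)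
    have Gp0: "G (x0,y0) = W (x0,y0)" unfolding G_def \<psi>_def by simp
    have p0K: "(x0,y0) \<in> K" unfolding K_def using r by simp
    have Gq: "G q \<ge> W (x0,y0)" using q(2)[OF p0K] Gp0 by simp
    obtain a b where qab: "q = (a,b)" by (cases q)
    have dq: "dist q (x0,y0) \<le> r" using q(1) unfolding K_def by (simp add: dist_commute)
    have Wnn: "W z \<ge> 0" for z unfolding W_def by simp
    have psinz: "\<psi> q \<noteq> 0" using Gq W0 unfolding G_def by auto
    have dlt: "dist q (x0,y0) < r"
    proof (rule ccontr)
      assume "\<not> ?thesis"
      hence "dist q (x0,y0) = r" using dq by simp
      hence "\<psi> q = 0" unfolding \<psi>_def using distsq[of q] r by simp
      thus False using psinz by simp
    qed
    have Ppos: "\<psi> q > 0"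
    proof -
      have "(dist q (x0,y0))\<^sup>2 < r\<^sup>2" using dlt by (simp add: power_strict_mono)
      hence "(dist q (x0,y0))\<^sup>2 / r\<^sup>2 < 1" using r by simp
      thus ?thesis unfolding \<psi>_def using distsq[of q] by simp
    qed
    have P1: "\<psi> q \<le> 1" unfolding \<psi>_def using r by simp
    have Wq: "W q > 0"
    proof -
      have "G q > 0" using Gq W0 by simp
      thus ?thesis unfolding G_def using Wnn[of q] by (metis mult_eq_0_iff less_eq_real_def power2_eq_square)
    qed
    define \<delta> where "\<delta> = r - dist q (x0,y0)"
    have \<delta>: "\<delta> > 0" using dlt \<delta>_def by simp
    have aclose: "\<bar>a - x0\<bar> \<le> dist q (x0,y0)"
      using dist_fst_le[of q "(x0,y0)"] qab by (simp add: dist_real_def)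
    have ar: "a > r" using aclose dlt r_def x0 by linarith
    have ad: "a > \<delta>" using aclose \<delta>_def r_def x0 dlt by linarith
    have mxx: "G (t,b) \<le> G (a,b)" if "\<bar>t - a\<bar> < \<delta>" for t
    proof -
      have "dist (t,b) (x0,y0) \<le> dist (t,b) (a,b) + dist (a,b) (x0,y0)" by (rule dist_triangle)
      also have "dist (t,b) (a,b) = \<bar>t - a\<bar>" by (simp add: dist_Pair_Pair dist_real_def)
      finally have "dist (t,b) (x0,y0) < r" using that \<delta>_def qab by simp
      hence "(t,b) \<in> K" unfolding K_def by (simp add: dist_commute)
      thus ?thesis using q(2) qab by simp
    qed
    have mxy: "G (a,s) \<le> G (a,b)" if "\<bar>s - b\<bar> < \<delta>" for s
    proof -
      have "dist (a,s) (x0,y0) \<le> dist (a,s) (a,b) + dist (a,b) (x0,y0)" by (rule dist_triangle)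
      also have "dist (a,s) (a,b) = \<bar>s - b\<bar>" by (simp add: dist_Pair_Pair dist_real_def)
      finally have "dist (a,s) (x0,y0) < r" using that \<delta>_def qab by simp
      hence "(a,s) \<in> K" unfolding K_def by (simp add: dist_commute)
      thus ?thesis using q(2) qab by simp
    qed
    have bnd: "(\<psi> (a,b))\<^sup>2 * W (a,b) \<le> 5*(26*((-2*(a-x0)/r\<^sup>2)\<^sup>2 + (-2*(b-y0)/r\<^sup>2)\<^sup>2)
            - 2*\<psi> (a,b)*((-2/r\<^sup>2) + (-2/r\<^sup>2) + 3*(1/a)*(-2*(a-x0)/r\<^sup>2)))"
      unfolding \<psi>_def W_def
      apply (rule at_max[OF sm pos pde \<delta> ad r])
      using mxx mxy Ppos Wq qab unfolding G_def \<psi>_def W_def by auto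
    have d2: "(a-x0)\<^sup>2 + (b-y0)\<^sup>2 < r\<^sup>2"
      using distsq[of q] dlt qab r by (simp add: power_strict_mono)
    have "G q \<le> 620 / r\<^sup>2"
      using bnd numeric_bound[OF r _ _ d2 ar, of "\<psi> (a,b)"] Ppos P1 qab unfolding G_def by simp
    hence "W (x0,y0) \<le> 620 / r\<^sup>2" using Gq by simp
    hence "W (x0,y0) \<le> 2480 / x0\<^sup>2" unfolding r_def by (simp add: power_divide)
    hence "x0\<^sup>2 * W (x0,y0) \<le> 2480" using x0 by (simp add: field_simps)
    thus ?thesis unfolding W_def .
  qed
qed



theorem proposition4p3:
  "\<exists>c::real. \<forall>f :: real \<times> real \<Rightarrow> real.
     smooth_on H2 f \<and> (\<forall>p\<in>H2. f p > 0) \<and>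
     (\<forall>p\<in>H2. px (px f) p + py (py f) p + 3 / fst p * px f p = 0)
     \<longrightarrow> (\<forall>p\<in>H2. fst p * sqrt ((px f p / f p)\<^sup>2 + (py f p / f p)\<^sup>2) < c)"
proof (intro exI[of _ 50] allI impI ballI)
  fix f :: "real \<times> real \<Rightarrow> real" and p :: "real \<times> real"
  assume asm: "smooth_on H2 f \<and> (\<forall>p\<in>H2. f p > 0) \<and>
     (\<forall>p\<in>H2. px (px f) p + py (py f) p + 3 / fst p * px f p = 0)"
    and p: "p \<in> H2"
  obtain x0 y0 where pp: "p = (x0,y0)" by (cases p)
  have x0: "x0 > 0" using p pp by simp
  define V where "V = (px f p / f p)\<^sup>2 + (py f p / f p)\<^sup>2"
  have V0: "V \<ge> 0" unfolding V_def by simp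
  have "x0\<^sup>2 * V \<le> 2480" using point_bound[of f x0 y0] asm x0 pp V_def by simp
  hence "sqrt (x0\<^sup>2 * V) \<le> sqrt 2480" by simp
  also have "sqrt 2480 < (50::real)"
  proof -
    have "sqrt 2480 < sqrt ((50::real)\<^sup>2)" by (simp only: real_sqrt_less_iff) simp
    thus ?thesis by simp
  qed
  finally have "sqrt (x0\<^sup>2 * V) < 50" .
  moreover have "sqrt (x0\<^sup>2 * V) = x0 * sqrt V" using x0 by (simp add: real_sqrt_mult)
  ultimately show "fst p * sqrt ((px f p / f p)\<^sup>2 + (py f p / f p)\<^sup>2) < 50"
    using pp V_def by simp
qed


end
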